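(* Let $\delta_1>0$ be an admissible one-dimensional sum-product exponent, i.e. a constant such that every finite, non-empty set $B\subseteq\mathbb{R}$ satisfies $|B+B|+|B\cdot B|\gtrsim |B|^{1+\delta_1}$. Let $d\in\mathbb{N}$ and let $A\subseteq\mathbb{R}^d$ be a finite, non-empty set. Then \[ |A+A|+|A\cdot A| \gtrsim_d |A|^{1+\delta_1/d}. \]
   Context: For $a=(a_1,\dots,a_d)$, $b=(b_1,\dots,b_d)\in\mathbb{R}^d$, addition and multiplication are coordinatewise: $a+b=(a_1+b_1,\dots,a_d+b_d)$, $a\cdot b=(a_1b_1,\dots,a_db_d)$. For finite sets $A,B$, $A+B=\{a+b: a\in A, b\in B\}$ and $A\cdot B=\{a\cdot b: a\in A,b\in B\}$. Notation: $X\gtrsim Y$ means $|X|\ge C|Y|(\log|A|)^{D}$ for some constants $C>0$ and $D$ (with $A$ the set under consideration); $X\gtrsim_z Y$ means the same with $C$ and $D$ allowed to depend on the parameter $z$. The paper takes $\delta_1$ to be the best known such exponent; by a result of Shakan, $\delta_1=1/3+5/5277$ is admissible. *)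

theory Defs
  imports "HOL-Analysis.Analysis"
begin

definition sumset :: "'a::plus set \<Rightarrow> 'a set \<Rightarrow> 'a set" where
  "sumset A B = {a + b | a b. a \<in> A \<and> b \<in> B}"

definition prodset :: "'a::times set \<Rightarrow> 'a set \<Rightarrow> 'a set" where
  "prodset A B = {a * b | a b. a \<in> A \<and> b \<in> B}"

end

theory Submission
  imports Defs
begin

lemma R1:
  fixes N H K T \<delta> :: real and d :: nat
  assumes "N \<ge> 1" "H \<ge> 1" "K > 0" "T > 0" "N \<le> T*K*H" "K \<ge> N powr (1/(d+1)) / H" "\<delta> > 0"
  shows "N powr (1+\<delta>/(d+1)) / H powr (1+\<delta>) \<le> T * K powr (1+\<delta>)"
proof -
  have "K powr \<delta> \<ge> (N powr (1/(d+1)) / H) powr \<delta>"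
    by (rule powr_mono2) (use assms in auto)
  also have "(N powr (1/(d+1)) / H) powr \<delta> = N powr (\<delta>/(d+1)) / H powr \<delta>"
    using assms by (simp add: powr_divide powr_powr)
  finally have a: "N powr (\<delta>/(d+1)) / H powr \<delta> \<le> K powr \<delta>" .
  have b: "N / H \<le> T * K" using assms by (simp add: field_simps)
  have "N powr (1+\<delta>/(d+1)) / H powr (1+\<delta>) = (N / H) * (N powr (\<delta>/(d+1)) / H powr \<delta>)"
    using assms by (simp add: powr_add)
  also have "\<dots> \<le> (T * K) * K powr \<delta>"
    by (rule mult_mono[OF b a]) (use assms in auto)
  also have "\<dots> = T * K powr (1+\<delta>)" using assms by (simp add: powr_add)
  finally show ?thesis .
qed

lemma R2:
  fixes N H K T \<delta> :: real and d :: nat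
  assumes "d > 0" "N \<ge> 1" "H \<ge> 1" "K > 0" "T > 0" "N \<le> T*K*H" "K < N powr (1/(d+1)) / H" "\<delta> > 0"
  shows "N powr (1+\<delta>/(d+1)) / H \<le> K * T powr (1+\<delta>/d)"
proof -
  have KH: "K * H < N powr (1/(d+1))" using assms by (simp add: field_simps)
  have "N powr (d/(d+1)) = N / N powr (1/(d+1))"
  proof -
    have "N powr (d/(d+1)) * N powr (1/(d+1)) = N"
      using assms by (simp add: powr_add[symmetric] add_divide_distrib[symmetric] add.commute)
    then show ?thesis using assms by (simp add: field_simps)
  qed
  also have "\<dots> \<le> N / (K*H)"
    by (rule divide_left_mono) (use assms KH in auto)
  also have "\<dots> \<le> T" using assms by (simp add: field_simps)
  finally have Tb: "N powr (d/(d+1)) \<le> T" .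
  have "N powr (\<delta>/(d+1)) = (N powr (d/(d+1))) powr (\<delta>/d)"
    using assms by (simp add: powr_powr)
  also have "\<dots> \<le> T powr (\<delta>/d)"
    by (rule powr_mono2) (use assms Tb in auto)
  finally have a: "N powr (\<delta>/(d+1)) \<le> T powr (\<delta>/d)" .
  have b: "N / H \<le> K * T" using assms by (simp add: field_simps)
  have "N powr (1+\<delta>/(d+1)) / H = (N / H) * N powr (\<delta>/(d+1))"
    using assms by (simp add: powr_add)
  also have "\<dots> \<le> (K*T) * T powr (\<delta>/d)"
    by (rule mult_mono[OF b a]) (use assms in auto)
  also have "\<dots> = K * T powr (1+\<delta>/d)" using assms by (simp add: powr_add)
  finally show ?thesis .
qed

definition opset :: "('a \<Rightarrow> 'a \<Rightarrow> 'b) \<Rightarrow> 'a set \<Rightarrow> 'a set \<Rightarrow> 'b set" where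
  "opset f A B = {f a b | a b. a \<in> A \<and> b \<in> B}"

lemma sumset_opset: "sumset A B = opset (+) A B" by (simp add: sumset_def opset_def)
lemma prodset_opset: "prodset A B = opset (*) A B" by (simp add: prodset_def opset_def)

lemma opset_image: "opset f A B = (\<lambda>(a,b). f a b) ` (A \<times> B)"
  by (auto simp: opset_def)

lemma finite_opset: "finite A \<Longrightarrow> finite B \<Longrightarrow> finite (opset f A B)"
  by (simp add: opset_image)

lemma opset_mono: "A \<subseteq> A' \<Longrightarrow> B \<subseteq> B' \<Longrightarrow> opset f A B \<subseteq> opset f A' B'"
  by (auto simp: opset_def)

definition fib :: "(real^'n) set \<Rightarrow> 'n \<Rightarrow> real \<Rightarrow> (real^'n) set" where
  "fib A i x = {v\<in>A. v$i = x}"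

lemma fiber_bound1:
  fixes A :: "(real^'n) set" and f :: "real^'n \<Rightarrow> real^'n \<Rightarrow> real^'n" and g :: "real \<Rightarrow> real \<Rightarrow> real"
  assumes "finite A" "X \<subseteq> (\<lambda>v. v$i) ` A" "\<forall>x\<in>X. t \<le> card (fib A i x)"
    "\<forall>a b. f a b $ i = g (a$i) (b$i)" "\<forall>b\<in>A. inj_on (\<lambda>a. f a b) A"
  shows "t * card (opset g X X) \<le> card (opset f A A)"
proof -
  let ?Y = "opset g X X"
  have "\<forall>s\<in>?Y. \<exists>p. fst p \<in> X \<and> snd p \<in> X \<and> g (fst p) (snd p) = s" by (auto simp: opset_def)
  then obtain p where p: "\<forall>s\<in>?Y. fst (p s) \<in> X \<and> snd (p s) \<in> X \<and> g (fst (p s)) (snd (p s)) = s"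
    by metis
  define T where "T s = opset f (fib A i (fst (p s))) (fib A i (snd (p s)))" for s
  have finX: "finite X" using finite_subset[OF assms(2) finite_imageI[OF assms(1)]] .
  have fin: "finite ?Y" by (rule finite_opset[OF finX finX])
  have Tsub: "(\<Union>s\<in>?Y. T s) \<subseteq> opset f A A" by (auto simp: T_def opset_def fib_def)
  have Ti: "\<forall>s\<in>?Y. \<forall>v\<in>T s. v$i = s"
  proof (intro ballI)
    fix s v assume s: "s \<in> ?Y" and v: "v \<in> T s"
    then obtain a b where "a \<in> fib A i (fst (p s))" "b \<in> fib A i (snd (p s))" "v = f a b"
      by (auto simp: T_def opset_def)
    then show "v$i = s" using p s assms(4) by (simp add: fib_def)
  qed
  have disj: "\<forall>s\<in>?Y. \<forall>s'\<in>?Y. s \<noteq> s' \<longrightarrow> T s \<inter> T s' = {}"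
  proof (intro ballI impI)
    fix x x' assume xx: "x \<in> ?Y" "x' \<in> ?Y" "x \<noteq> x'"
    show "T x \<inter> T x' = {}"
    proof (rule ccontr)
      assume "T x \<inter> T x' \<noteq> {}"
      then obtain v where "v \<in> T x" "v \<in> T x'" by blast
      then have "v$i = x" "v$i = x'" using Ti xx by blast+
      then show False using xx by simp
    qed
  qed
  have finT: "\<forall>s\<in>?Y. finite (T s)"
    using Tsub finite_opset[OF assms(1) assms(1)] by (meson UN_subset_iff finite_subset)
  have cardT: "\<forall>s\<in>?Y. t \<le> card (T s)"
  proof
    fix s assume s: "s \<in> ?Y"
    obtain b where b: "b \<in> A" "b$i = snd (p s)" using p s assms(2) by force
    have "(\<lambda>a. f a b) ` fib A i (fst (p s)) \<subseteq> T s" using b by (auto simp: T_def opset_def fib_def)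
    moreover have "card ((\<lambda>a. f a b) ` fib A i (fst (p s))) = card (fib A i (fst (p s)))"
      by (rule card_image) (rule inj_on_subset[OF assms(5)[rule_format, OF b(1)]], auto simp: fib_def)
    ultimately have "card (fib A i (fst (p s))) \<le> card (T s)" using card_mono finT s by metis
    then show "t \<le> card (T s)" using assms(3) p s by force
  qed
  have "t * card ?Y = (\<Sum>s\<in>?Y. t)" by simp
  also have "\<dots> \<le> (\<Sum>s\<in>?Y. card (T s))" by (rule sum_mono) (use cardT in auto)
  also have "\<dots> = card (\<Union>s\<in>?Y. T s)" by (rule card_UN_disjoint[symmetric]) (use fin finT disj in auto)
  also have "\<dots> \<le> card (opset f A A)" by (rule card_mono[OF finite_opset[OF assms(1) assms(1)] Tsub])
  finally show ?thesis .
qed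

lemma fiber_bound2:
  fixes A :: "(real^'n) set" and f :: "real^'n \<Rightarrow> real^'n \<Rightarrow> real^'n" and g :: "real \<Rightarrow> real \<Rightarrow> real"
  assumes "finite A" "finite X" "\<forall>a b. f a b $ i = g (a$i) (b$i)" "inj_on (\<lambda>x. g x x) X"
  shows "(\<Sum>x\<in>X. card (opset f (fib A i x) (fib A i x))) \<le> card (opset f A A)"
proof -
  define T where "T x = opset f (fib A i x) (fib A i x)" for x
  have Tsub: "(\<Union>x\<in>X. T x) \<subseteq> opset f A A" by (auto simp: T_def opset_def fib_def)
  have Ti: "\<forall>x\<in>X. \<forall>v\<in>T x. v$i = g x x" using assms(3) by (auto simp: T_def opset_def fib_def)
  have disj: "\<forall>x\<in>X. \<forall>x'\<in>X. x \<noteq> x' \<longrightarrow> T x \<inter> T x' = {}"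
  proof (intro ballI impI)
    fix x x' assume xx: "x \<in> X" "x' \<in> X" "x \<noteq> x'"
    then have "g x x \<noteq> g x' x'" using assms(4) unfolding inj_on_def by blast
    show "T x \<inter> T x' = {}"
    proof (rule ccontr)
      assume "T x \<inter> T x' \<noteq> {}"
      then obtain v where "v \<in> T x" "v \<in> T x'" by blast
      then have "v$i = g x x" "v$i = g x' x'" using Ti xx by blast+
      then show False using \<open>g x x \<noteq> g x' x'\<close> by simp
    qed
  qed
  have finT: "\<forall>x\<in>X. finite (T x)"
    using Tsub finite_opset[OF assms(1) assms(1)] by (meson UN_subset_iff finite_subset)
  have "(\<Sum>x\<in>X. card (T x)) = card (\<Union>x\<in>X. T x)"
    by (rule card_UN_disjoint[symmetric]) (use assms(2) finT disj in auto)
  also have "\<dots> \<le> card (opset f A A)" by (rule card_mono[OF finite_opset[OF assms(1) assms(1)] Tsub])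
  finally show ?thesis by (simp add: T_def)
qed

lemma sum_inv_le:
  assumes "n \<ge> 1"
  shows "(\<Sum>t\<in>{1..n}. 1 / real t) \<le> 1 + ln (real n)"
  using assms
proof (induction n rule: dec_induct)
  case base
  then show ?case by simp
next
  case (step n)
  have n: "real n \<ge> 1" using step by simp
  have "ln (real n / (real n + 1)) \<le> real n / (real n + 1) - 1"
    by (rule ln_le_minus_one) (use n in auto)
  also have "\<dots> = - 1 / (real n + 1)" using n by (simp add: field_simps)
  finally have "ln (real n) - ln (real n + 1) \<le> - 1 / (real n + 1)"
    using n by (simp add: ln_div)
  then have "1 / real (Suc n) \<le> ln (real (Suc n)) - ln (real n)" by (simp add: algebra_simps)
  moreover have "{1..Suc n} = insert (Suc n) {1..n}" by auto
  ultimately show ?case using step by simp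
qed

lemma cnt:
  assumes "finite A"
  shows "card {x\<in>A. P x} = (\<Sum>x\<in>A. if P x then 1 else (0::nat))"
  by (rule trans[OF card_eq_sum sum.inter_filter[OF assms]])

lemma layer:
  fixes h :: "'a \<Rightarrow> nat"
  assumes "finite X" "\<forall>x\<in>X. 0 < h x" "n = (\<Sum>x\<in>X. h x)" "n \<ge> 1"
  shows "\<exists>t\<ge>1. real n \<le> real t * real (card {x\<in>X. t \<le> h x}) * (1 + ln (real n))"
proof (rule ccontr)
  assume "\<not> ?thesis"
  then have lt: "\<forall>t\<ge>1. real t * real (card {x\<in>X. t \<le> h x}) * (1 + ln (real n)) < real n" by force
  have H: "1 + ln (real n) \<ge> 1" using assms(4) by simp
  have hle: "\<forall>x\<in>X. h x \<le> n"
  proof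
    fix x assume "x \<in> X"
    then show "h x \<le> n" unfolding assms(3) by (rule member_le_sum) (use assms(1) in auto)
  qed
  have hx: "h x = (\<Sum>t\<in>{1..n}. if t \<le> h x then 1 else 0)" if "x \<in> X" for x
  proof -
    have "{t\<in>{1..n}. t \<le> h x} = {1..h x}" using hle that by auto
    then have "h x = card {t\<in>{1..n}. t \<le> h x}" by simp
    also have "\<dots> = (\<Sum>t\<in>{1..n}. if t \<le> h x then 1 else 0)" by (rule cnt) simp
    finally show ?thesis .
  qed
  have "n = (\<Sum>x\<in>X. h x)" by (rule assms(3))
  also have "\<dots> = (\<Sum>x\<in>X. \<Sum>t\<in>{1..n}. if t \<le> h x then 1 else 0)"
    by (rule sum.cong[OF refl hx])
  also have "\<dots> = (\<Sum>t\<in>{1..n}. \<Sum>x\<in>X. if t \<le> h x then 1 else 0)"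
    by (rule sum.swap)
  also have "\<dots> = (\<Sum>t\<in>{1..n}. card {x\<in>X. t \<le> h x})"
    by (rule sum.cong[OF refl]) (rule cnt[OF assms(1), symmetric])
  finally have eq: "real n = (\<Sum>t\<in>{1..n}. real (card {x\<in>X. t \<le> h x}))"
    by (metis of_nat_sum)
  also have "\<dots> < (\<Sum>t\<in>{1..n}. real n / (1 + ln (real n)) * (1 / real t))"
  proof (rule sum_strict_mono)
    show "finite {1..n}" by simp
    show "{1..n} \<noteq> {}" using assms(4) by simp
    fix t assume t: "t \<in> {1..n}"
    then have "real t * real (card {x\<in>X. t \<le> h x}) * (1 + ln (real n)) < real n" using lt by auto
    then have a: "real (card {x\<in>X. t \<le> h x}) * (real t * (1 + ln (real n))) < real n"
      by (simp add: mult_ac)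
    have "real t > 0" using t by auto
    then have pos: "real t * (1 + ln (real n)) > 0" using H by (intro mult_pos_pos) auto
    have "real (card {x\<in>X. t \<le> h x}) < real n / (real t * (1 + ln (real n)))"
      using a pos by (simp add: pos_less_divide_eq)
    then show "real (card {x\<in>X. t \<le> h x}) < real n / (1 + ln (real n)) * (1 / real t)"
      by (simp add: mult_ac)
  qed
  also have "\<dots> = real n / (1 + ln (real n)) * (\<Sum>t\<in>{1..n}. 1 / real t)"
    by (simp add: sum_distrib_left)
  also have "\<dots> \<le> real n / (1 + ln (real n)) * (1 + ln (real n))"
    by (rule mult_left_mono[OF sum_inv_le[OF assms(4)]]) (use H in auto)
  also have "\<dots> = real n" using H by simp
  finally show False by simp
qed

lemma pigeon:
  fixes f :: "'a \<Rightarrow> nat"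
  assumes "finite Z" "Z \<noteq> {}" "n = (\<Sum>z\<in>Z. f z)"
  shows "\<exists>z\<in>Z. n \<le> card Z * f z"
proof (rule ccontr)
  assume "\<not> ?thesis"
  then have "\<forall>z\<in>Z. card Z * f z < n" by auto
  then have "(\<Sum>z\<in>Z. card Z * f z) < (\<Sum>z\<in>Z. n)"
    using assms by (intro sum_strict_mono) auto
  then show False using assms(3) by (simp add: sum_distrib_left)
qed

definition FF :: "'a::{plus,times} set \<Rightarrow> real" where
  "FF A = real (card (sumset A A)) + real (card (prodset A A))"

definition good :: "(real^'n) set \<Rightarrow> 'n set \<Rightarrow> bool" where
  "good A S \<longleftrightarrow> (\<forall>v\<in>A. \<forall>w\<in>A. \<forall>j. j \<notin> S \<longrightarrow> v$j = w$j) \<and> (\<forall>v\<in>A. \<forall>j\<in>S. v$j \<noteq> 0)"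

lemma FF_single: "FF {a} = 2"
  by (simp add: FF_def sumset_def prodset_def)

lemma FF_card1: "card A = 1 \<Longrightarrow> FF A = 2"
  by (metis FF_single card_1_singletonE)

lemma FF_mono: "finite B \<Longrightarrow> A \<subseteq> B \<Longrightarrow> FF A \<le> FF B"
  unfolding FF_def sumset_opset prodset_opset
  by (intro add_mono of_nat_mono card_mono finite_opset opset_mono) auto

lemma FF_nonneg: "FF A \<ge> 0" by (simp add: FF_def)

lemma Hmono:
  fixes H x E E0 :: real
  assumes "H \<ge> 1" "E0 \<le> E" "x \<ge> 0"
  shows "x / H powr E \<le> x / H powr E0"
proof -
  have "H powr E0 \<le> H powr E" using assms by (intro powr_mono) auto
  moreover have "H powr E0 > 0" using assms by simp
  ultimately show ?thesis using assms by (intro divide_left_mono) auto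
qed

lemma R0:
  fixes C L D :: real
  assumes "C > 0" "L \<ge> ln 2"
  shows "min 1 (C * min 1 (ln 2 powr D)) / (1+L) powr (max 0 (-D)) \<le> C * L powr D"
proof -
  have l2: "ln 2 > (0::real)" by simp
  have L0: "L > 0" using assms l2 by linarith
  show ?thesis
  proof (cases "D \<ge> 0")
    case True
    have "min 1 (C * min 1 (ln 2 powr D)) \<le> C * min 1 (ln 2 powr D)" by simp
    also have "\<dots> \<le> C * ln 2 powr D" using assms by (intro mult_left_mono) auto
    also have "\<dots> \<le> C * L powr D" using assms True l2 by (intro mult_left_mono powr_mono2) auto
    finally show ?thesis using True L0 assms by simp
  next
    case False
    have a: "min 1 (C * min 1 (ln 2 powr D)) \<le> C"
      using assms l2 by (smt (verit) mult_left_le powr_gt_zero min_def)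
    have b: "L powr (-D) \<le> (1+L) powr (-D)" using False L0 by (intro powr_mono2) auto
    have "min 1 (C * min 1 (ln 2 powr D)) / (1+L) powr (-D) \<le> C / L powr (-D)"
      using a b L0 assms by (intro frac_le) auto
    also have "\<dots> = C * L powr D" using L0 by (simp add: powr_minus divide_inverse)
    finally show ?thesis using False by simp
  qed
qed

lemma hyp_norm:
  fixes \<delta> :: real
  assumes "\<exists>C>0. \<exists>D::real. \<forall>B::real set. finite B \<and> B \<noteq> {} \<longrightarrow>
           real (card (sumset B B)) + real (card (prodset B B))
             \<ge> C * real (card B) powr (1 + \<delta>) * ln (real (card B)) powr D"
  shows "\<exists>c1>0. \<exists>E1\<ge>0. \<forall>B::real set. finite B \<and> B \<noteq> {} \<longrightarrow>
           FF B \<ge> c1 * real (card B) powr (1+\<delta>) / (1 + ln (real (card B))) powr E1"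
proof -
  obtain C D where C: "C > 0" and hyp: "\<forall>B::real set. finite B \<and> B \<noteq> {} \<longrightarrow>
           real (card (sumset B B)) + real (card (prodset B B))
             \<ge> C * real (card B) powr (1 + \<delta>) * ln (real (card B)) powr D"
    using assms by blast
  define c1 where "c1 = min 1 (C * min 1 (ln 2 powr D))"
  define E1 where "E1 = max 0 (-D)"
  have c1: "c1 > 0" using C by (simp add: c1_def)
  have "\<forall>B::real set. finite B \<and> B \<noteq> {} \<longrightarrow>
           FF B \<ge> c1 * real (card B) powr (1+\<delta>) / (1 + ln (real (card B))) powr E1"
  proof (intro allI impI)
    fix B :: "real set" assume B: "finite B \<and> B \<noteq> {}"
    then have k1: "card B \<ge> 1" by (simp add: Suc_le_eq card_gt_0_iff)
    show "FF B \<ge> c1 * real (card B) powr (1+\<delta>) / (1 + ln (real (card B))) powr E1"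
    proof (cases "card B = 1")
      case True
      then show ?thesis using FF_card1[OF True] by (simp add: c1_def)
    next
      case False
      then have k2: "real (card B) \<ge> 2" using k1 by simp
      have L: "ln (real (card B)) \<ge> ln 2" using k2 by simp
      have "c1 / (1 + ln (real (card B))) powr E1 \<le> C * ln (real (card B)) powr D"
        unfolding c1_def E1_def by (rule R0[OF C L])
      then have "real (card B) powr (1+\<delta>) * (c1 / (1 + ln (real (card B))) powr E1)
          \<le> real (card B) powr (1+\<delta>) * (C * ln (real (card B)) powr D)"
        by (rule mult_left_mono) simp
      also have "\<dots> \<le> FF B" using hyp B by (simp add: FF_def mult_ac)
      finally show ?thesis by (simp add: ac_simps)
    qed
  qed
  moreover have "E1 \<ge> 0" by (simp add: E1_def)
  ultimately show ?thesis using c1 by blast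
qed

lemma good_inj_mult:
  fixes A :: "(real^'n) set"
  assumes "good A S" "b \<in> A"
  shows "inj_on (\<lambda>a. a * b) A"
proof (rule inj_onI)
  fix a a' assume aa: "a \<in> A" "a' \<in> A" "a * b = a' * b"
  show "a = a'"
  proof (subst vec_eq_iff, rule allI)
    fix j
    show "a$j = a'$j"
    proof (cases "j \<in> S")
      case True
      then have "b$j \<noteq> 0" using assms unfolding good_def by blast
      moreover have "(a * b)$j = (a' * b)$j" using aa(3) by (rule arg_cong)
      then have "a$j * b$j = a'$j * b$j" by simp
      ultimately show ?thesis by simp
    next
      case False
      then show ?thesis using assms aa unfolding good_def by blast
    qed
  qed
qed

lemma good_fib:
  fixes A :: "(real^'n) set"
  assumes "good A S"
  shows "good (fib A i x) (S - {i})"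
  using assms unfolding good_def fib_def by auto

lemma good_empty_card:
  fixes A :: "(real^'n) set"
  assumes "good A {}" "finite A"
  shows "card A \<le> 1"
proof -
  have "\<forall>v\<in>A. \<forall>w\<in>A. v = w"
  proof (intro ballI)
    fix v w assume vw: "v \<in> A" "w \<in> A"
    have "\<forall>j. v$j = w$j" using assms(1) vw unfolding good_def by blast
    then show "v = w" by (simp add: vec_eq_iff)
  qed
  then show ?thesis using card_le_Suc0_iff_eq[OF assms(2)] by simp
qed

lemma bound1:
  fixes A :: "(real^'n) set"
  assumes "finite A" "good A S" "X \<subseteq> (\<lambda>v. v$i) ` A" "\<forall>x\<in>X. t \<le> card (fib A i x)"
  shows "real t * FF X \<le> FF A"
proof -
  have s: "t * card (opset (+) X X) \<le> card (opset (+) A A)"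
    by (rule fiber_bound1[OF assms(1,3,4)]) (auto simp: inj_on_def)
  have p: "t * card (opset (*) X X) \<le> card (opset (*) A A)"
    by (rule fiber_bound1[OF assms(1,3,4)]) (use good_inj_mult[OF assms(2)] in auto)
  have s': "real t * real (card (opset (+) X X)) \<le> real (card (opset (+) A A))"
    using s by (simp only: of_nat_mult[symmetric] of_nat_le_iff)
  have p': "real t * real (card (opset (*) X X)) \<le> real (card (opset (*) A A))"
    using p by (simp only: of_nat_mult[symmetric] of_nat_le_iff)
  show ?thesis unfolding FF_def sumset_opset prodset_opset distrib_left
    by (rule add_mono[OF s' p'])
qed

lemma bound2:
  fixes A :: "(real^'n) set"
  assumes "finite A" "finite X" "inj_on (\<lambda>x. x + x) X" "inj_on (\<lambda>x. x * x) X"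
  shows "(\<Sum>x\<in>X. FF (fib A i x)) \<le> FF A"
proof -
  have s: "(\<Sum>x\<in>X. card (opset (+) (fib A i x) (fib A i x))) \<le> card (opset (+) A A)"
    by (rule fiber_bound2[where g="(+)"]) (use assms in auto)
  have p: "(\<Sum>x\<in>X. card (opset (*) (fib A i x) (fib A i x))) \<le> card (opset (*) A A)"
    by (rule fiber_bound2[where g="(*)"]) (use assms in auto)
  have s': "(\<Sum>x\<in>X. real (card (opset (+) (fib A i x) (fib A i x)))) \<le> real (card (opset (+) A A))"
    using s by (simp only: of_nat_sum[symmetric] of_nat_le_iff)
  have p': "(\<Sum>x\<in>X. real (card (opset (*) (fib A i x) (fib A i x)))) \<le> real (card (opset (*) A A))"
    using p by (simp only: of_nat_sum[symmetric] of_nat_le_iff)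
  show ?thesis unfolding FF_def sumset_opset prodset_opset sum.distrib
    by (rule add_mono[OF s' p'])
qed

lemma card_fib_sum:
  fixes A :: "(real^'n) set"
  assumes "finite A"
  shows "card A = (\<Sum>x\<in>(\<lambda>v. v$i) ` A. card (fib A i x))"
proof -
  have "A = (\<Union>x\<in>(\<lambda>v. v$i) ` A. fib A i x)" by (auto simp: fib_def)
  then have "card A = card (\<Union>x\<in>(\<lambda>v. v$i) ` A. fib A i x)" by simp
  also have "\<dots> = (\<Sum>x\<in>(\<lambda>v. v$i) ` A. card (fib A i x))"
    by (rule card_UN_disjoint) (use assms in \<open>auto simp: fib_def\<close>)
  finally show ?thesis .
qed

lemma sign_split:
  fixes X :: "real set"
  assumes "finite X" "0 \<notin> X"
  shows "\<exists>Y\<subseteq>X. card X \<le> 2 * card Y \<and> inj_on (\<lambda>x. x + x) Y \<and> inj_on (\<lambda>x. x * x) Y"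
proof -
  let ?P = "{x\<in>X. 0 < x}" and ?N = "{x\<in>X. x < 0}"
  have XU: "X = ?P \<union> ?N"
  proof (rule set_eqI)
    fix x show "x \<in> X \<longleftrightarrow> x \<in> ?P \<union> ?N" using assms(2) by (cases "x = 0") auto
  qed
  have "card X = card ?P + card ?N"
    by (subst XU, rule card_Un_disjoint) (use assms in auto)
  then have c: "card X \<le> 2 * card ?P \<or> card X \<le> 2 * card ?N" by linarith
  have iP: "inj_on (\<lambda>x. x * x) ?P" by (auto simp: inj_on_def square_eq_iff)
  have iN: "inj_on (\<lambda>x. x * x) ?N" by (auto simp: inj_on_def square_eq_iff)
  have a: "\<And>Y. inj_on (\<lambda>x::real. x + x) Y" by (auto simp: inj_on_def)
  show ?thesis
  proof (cases "card X \<le> 2 * card ?P")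
    case True
    then show ?thesis using iP a[of ?P] by (intro exI[of _ ?P]) auto
  next
    case False
    then have "card X \<le> 2 * card ?N" using c by simp
    then show ?thesis using iN a[of ?N] by (intro exI[of _ ?N]) auto
  qed
qed

lemma R4:
  fixes c p E h T N :: real
  assumes "c > 0" "p \<ge> 0" "E \<ge> 0" "1 \<le> T" "T \<le> h" "h \<le> N"
  shows "c * T powr p / (1 + ln N) powr E \<le> c * h powr p / (1 + ln h) powr E"
proof -
  have "ln h \<le> ln N" using assms by simp
  then have "(1 + ln h) powr E \<le> (1 + ln N) powr E"
    using assms by (intro powr_mono2) auto
  moreover have "T powr p \<le> h powr p" using assms by (intro powr_mono2) auto
  moreover have "(1 + ln h) powr E > 0"
  proof -
    have "ln h \<ge> 0" using assms by simp
    then show ?thesis by simp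
  qed
  ultimately show ?thesis using assms
    by (intro frac_le mult_left_mono) auto
qed

lemma step_lemma:
  fixes \<delta> c1 E1 :: real and d :: nat
  assumes dpos: "\<delta> > 0" and c1: "c1 > 0" and E1: "E1 \<ge> 0"
    and H1: "\<forall>B::real set. finite B \<and> B \<noteq> {} \<longrightarrow>
           FF B \<ge> c1 * real (card B) powr (1+\<delta>) / (1 + ln (real (card B))) powr E1"
    and IH: "d > 0 \<Longrightarrow> \<exists>c'>0. \<exists>E'\<ge>0. \<forall>(A::(real^'n) set) S. finite A \<and> A \<noteq> {} \<and> card S \<le> d \<and> good A S
             \<longrightarrow> FF A \<ge> c' * real (card A) powr (1+\<delta>/d) / (1 + ln (real (card A))) powr E'"
  shows "\<exists>c>0. \<exists>E\<ge>0. \<forall>(A::(real^'n) set) S. finite A \<and> A \<noteq> {} \<and> card S \<le> Suc d \<and> good A S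
             \<longrightarrow> FF A \<ge> c * real (card A) powr (1+\<delta>/(d+1)) / (1 + ln (real (card A))) powr E"
proof -
  obtain c' E' where c': "c' > 0" and E': "E' \<ge> 0" and IH': "d > 0 \<Longrightarrow> \<forall>(A::(real^'n) set) S. finite A \<and> A \<noteq> {} \<and> card S \<le> d \<and> good A S
             \<longrightarrow> FF A \<ge> c' * real (card A) powr (1+\<delta>/d) / (1 + ln (real (card A))) powr E'"
  proof (cases "d > 0")
    case True
    from IH[OF True] obtain c0 E0 where h0: "c0 > 0" "E0 \<ge> 0" and h1: "\<forall>(A::(real^'n) set) S. finite A \<and> A \<noteq> {} \<and> card S \<le> d \<and> good A S
             \<longrightarrow> FF A \<ge> c0 * real (card A) powr (1+\<delta>/d) / (1 + ln (real (card A))) powr E0"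
      by blast
    show ?thesis by (rule that[OF h0]) (rule h1)
  next
    case False
    then show ?thesis using that[of 1 0] by simp
  qed
  define c where "c = min 1 (min c1 (c'/2))"
  define E where "E = max (1+\<delta>+E1) (1+E')"
  have cpos: "c > 0" using c1 c' by (simp add: c_def)
  have Epos: "E \<ge> 0" using E' by (simp add: E_def)
  have main: "FF A \<ge> c * real (card A) powr (1+\<delta>/(d+1)) / (1 + ln (real (card A))) powr E"
    if A: "finite A" "A \<noteq> {}" "card S \<le> Suc d" "good A S" for A :: "(real^'n) set" and S
  proof -
    define n where "n = card A"
    define N where "N = real n"
    define H where "H = 1 + ln N"
    have n1: "n \<ge> 1" using A by (simp add: n_def Suc_le_eq card_gt_0_iff)
    have N1: "N \<ge> 1" using n1 by (simp add: N_def)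
    have H1': "H \<ge> 1" using N1 by (simp add: H_def)
    show ?thesis
    proof (cases "n = 1")
      case True
      then show ?thesis using FF_card1[of A] by (simp add: n_def c_def)
    next
      case False
      then have n2: "n \<ge> 2" using n1 by simp
      have "S \<noteq> {}"
      proof
        assume "S = {}"
        then have "card A \<le> 1" using good_empty_card A by blast
        then show False using n2 by (simp add: n_def)
      qed
      then obtain i where i: "i \<in> S" by blast
      define X where "X = (\<lambda>v. v$i) ` A"
      define h where "h x = card (fib A i x)" for x
      have finX: "finite X" using A by (simp add: X_def)
      have hpos: "\<forall>x\<in>X. 0 < h x"
        using A by (auto simp: X_def h_def fib_def card_gt_0_iff)
      have nsum: "n = (\<Sum>x\<in>X. h x)" using card_fib_sum[OF A(1), of i] by (simp add: n_def X_def h_def)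
      obtain t where t1: "t \<ge> 1" and tb: "real n \<le> real t * real (card {x\<in>X. t \<le> h x}) * (1 + ln (real n))"
        using layer[OF finX hpos nsum n1] by blast
      define X' where "X' = {x\<in>X. t \<le> h x}"
      define k where "k = card X'"
      define K where "K = real k"
      define T where "T = real t"
      have NTKH: "N \<le> T * K * H" using tb by (simp add: N_def T_def K_def k_def X'_def H_def)
      have T1: "T \<ge> 1" using t1 by (simp add: T_def)
      have k0: "k > 0"
      proof (rule ccontr)
        assume "\<not> k > 0" then have "K = 0" by (simp add: K_def)
        then show False using NTKH N1 by simp
      qed
      have K0: "K > 0" using k0 by (simp add: K_def)
      have X'sub: "X' \<subseteq> X" by (auto simp: X'_def)
      have finX': "finite X'" using finX X'sub finite_subset by blast
      have X'ne: "X' \<noteq> {}" using k0 by (auto simp: k_def)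
      have kn: "k \<le> n"
      proof -
        have "k \<le> card X" by (simp add: k_def card_mono[OF finX X'sub])
        also have "card X \<le> n" by (simp add: X_def n_def card_image_le A(1))
        finally show ?thesis .
      qed
      have KN: "K \<le> N" using kn by (simp add: K_def N_def)
      have fibt: "\<forall>x\<in>X'. t \<le> card (fib A i x)" by (auto simp: X'_def h_def)
      have b1: "T * FF X' \<le> FF A"
        using bound1[OF A(1) A(4) _ fibt] X'sub by (simp add: T_def X_def)
      have FFX': "FF X' \<ge> c1 * K powr (1+\<delta>) / H powr E1"
      proof -
        have "c1 * K powr (1+\<delta>) / H powr E1 \<le> c1 * K powr (1+\<delta>) / (1 + ln K) powr E1"
          using R4[OF c1 _ E1 _ order.refl KN, of "1+\<delta>"] K0 dpos k0
          by (simp add: H_def K_def)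
        also have "\<dots> \<le> FF X'" using H1 finX' X'ne by (simp add: K_def k_def)
        finally show ?thesis .
      qed
      show ?thesis
      proof (cases "K \<ge> N powr (1/(d+1)) / H")
        case True
        have "N powr (1+\<delta>/(d+1)) / H powr (1+\<delta>) \<le> T * K powr (1+\<delta>)"
          by (rule R1[OF N1 H1' K0 _ NTKH True dpos]) (use T1 in simp)
        then have "c1 * (N powr (1+\<delta>/(d+1)) / H powr (1+\<delta>)) / H powr E1 \<le> c1 * (T * K powr (1+\<delta>)) / H powr E1"
          using c1 H1' by (intro divide_right_mono mult_left_mono) auto
        also have "\<dots> = T * (c1 * K powr (1+\<delta>) / H powr E1)" by simp
        also have "\<dots> \<le> T * FF X'" using FFX' T1 by (intro mult_left_mono) auto
        also have "\<dots> \<le> FF A" by (rule b1)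
        finally have a: "c1 * N powr (1+\<delta>/(d+1)) / H powr (1+\<delta>+E1) \<le> FF A"
          using H1' by (simp add: powr_add)
        have "c * N powr (1+\<delta>/(d+1)) / H powr E \<le> c1 * N powr (1+\<delta>/(d+1)) / H powr E"
          using c1 H1' by (intro divide_right_mono mult_right_mono) (auto simp: c_def)
        also have "\<dots> \<le> c1 * N powr (1+\<delta>/(d+1)) / H powr (1+\<delta>+E1)"
          by (rule Hmono[OF H1']) (use c1 in \<open>auto simp: E_def\<close>)
        finally show ?thesis using a by (simp add: N_def n_def H_def)
      next
        case False
        then have Klt: "K < N powr (1/(d+1)) / H" by simp
        have dpos': "d > 0"
        proof (rule ccontr)
          assume "\<not> d > 0"
          then have d0: "d = 0" by simp
          then have "card S \<le> 1" using A by simp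
          moreover have "finite S" by simp
          ultimately have Si: "S - {i} = {}" using i card_le_Suc0_iff_eq[of S] by auto
          have "\<forall>x. card (fib A i x) \<le> 1"
          proof
            fix x
            have "good (fib A i x) {}" using good_fib[OF A(4), of i x] Si by simp
            moreover have "finite (fib A i x)" using A(1) by (simp add: fib_def)
            ultimately show "card (fib A i x) \<le> 1" by (rule good_empty_card)
          qed
          moreover obtain x0 where "x0 \<in> X'" using X'ne by blast
          ultimately have "t \<le> 1" using fibt by (meson le_trans)
          then have "T = 1" using t1 by (simp add: T_def)
          then have "N / H \<le> K" using NTKH H1' by (simp add: field_simps)
          then show False using Klt d0 N1 by simp
        qed
        obtain Y where Y: "Y \<subseteq> X'" "card X' \<le> 2 * card Y" "inj_on (\<lambda>x. x + x) Y" "inj_on (\<lambda>x. x * x) Y"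
        proof -
          have "0 \<notin> X'" using A(4) i by (auto simp: X'_def X_def good_def)
          then show ?thesis using sign_split[OF finX'] that by blast
        qed
        have finY: "finite Y" using finX' Y(1) finite_subset by blast
        have b2: "(\<Sum>x\<in>Y. FF (fib A i x)) \<le> FF A" by (rule bound2[OF A(1) finY Y(3) Y(4)])
        have cardSi: "card (S - {i}) \<le> d" using A(3) i by (simp add: card_Diff_singleton)
        have fibb: "c' * T powr (1+\<delta>/d) / H powr E' \<le> FF (fib A i x)" if x: "x \<in> Y" for x
        proof -
          have xX: "x \<in> X'" using x Y(1) by blast
          have fin: "finite (fib A i x)" using A(1) by (simp add: fib_def)
          have ne: "fib A i x \<noteq> {}" using xX by (auto simp: X'_def X_def fib_def)
          have th: "T \<le> real (card (fib A i x))" using fibt xX by (simp add: T_def)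
          have hn: "card (fib A i x) \<le> n" unfolding n_def by (rule card_mono[OF A(1)]) (auto simp: fib_def)
          have "c' * T powr (1+\<delta>/d) / H powr E' \<le> c' * real (card (fib A i x)) powr (1+\<delta>/d) / (1 + ln (real (card (fib A i x)))) powr E'"
            unfolding H_def by (rule R4[OF c' _ E' T1 th]) (use dpos hn in \<open>auto simp: N_def\<close>)
          also have "\<dots> \<le> FF (fib A i x)"
          proof -
            have pre: "finite (fib A i x) \<and> fib A i x \<noteq> {} \<and> card (S - {i}) \<le> d \<and> good (fib A i x) (S - {i})"
              using fin ne cardSi good_fib[OF A(4)] by blast
            show ?thesis
              by (rule mp[OF IH'[OF dpos', THEN spec[where x="fib A i x"], THEN spec[where x="S - {i}"]] pre])
          qed
          finally show ?thesis .
        qed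
        have "real (card Y) * (c' * T powr (1+\<delta>/d) / H powr E') \<le> (\<Sum>x\<in>Y. FF (fib A i x))"
          using sum_mono[OF fibb] by simp
        also have "\<dots> \<le> FF A" by (rule b2)
        finally have a0: "real (card Y) * (c' * T powr (1+\<delta>/d) / H powr E') \<le> FF A" .
        have KY: "K / 2 \<le> real (card Y)" using Y(2) by (simp add: K_def k_def)
        have "(c'/2) * (N powr (1+\<delta>/(d+1)) / H) / H powr E' \<le> (c'/2) * (K * T powr (1+\<delta>/d)) / H powr E'"
          using c' H1' R2[OF dpos' N1 H1' K0 _ NTKH Klt dpos] T1
          by (intro divide_right_mono mult_left_mono) auto
        also have "\<dots> = (K/2) * (c' * T powr (1+\<delta>/d) / H powr E')" by simp
        also have "\<dots> \<le> real (card Y) * (c' * T powr (1+\<delta>/d) / H powr E')"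
          using KY c' H1' by (intro mult_right_mono) auto
        also have "\<dots> \<le> FF A" by (rule a0)
        finally have a: "(c'/2) * N powr (1+\<delta>/(d+1)) / H powr (1+E') \<le> FF A"
          using H1' by (simp add: powr_add)
        have "c * N powr (1+\<delta>/(d+1)) / H powr E \<le> (c'/2) * N powr (1+\<delta>/(d+1)) / H powr E"
          using c' H1' by (intro divide_right_mono mult_right_mono) (auto simp: c_def)
        also have "\<dots> \<le> (c'/2) * N powr (1+\<delta>/(d+1)) / H powr (1+E')"
          by (rule Hmono[OF H1']) (use c' in \<open>auto simp: E_def\<close>)
        finally show ?thesis using a by (simp add: N_def n_def H_def)
      qed
    qed
  qed
  show ?thesis
    apply (rule exI[where x=c], rule conjI[OF cpos])
    apply (rule exI[where x=E], rule conjI[OF Epos])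
    apply (intro allI impI)
    apply (rule main)
       apply auto
    done
qed

lemma claim:
  fixes \<delta> c1 E1 :: real
  assumes dpos: "\<delta> > 0" and c1: "c1 > 0" and E1: "E1 \<ge> 0"
    and H1: "\<forall>B::real set. finite B \<and> B \<noteq> {} \<longrightarrow>
           FF B \<ge> c1 * real (card B) powr (1+\<delta>) / (1 + ln (real (card B))) powr E1"
  shows "\<exists>c>0. \<exists>E\<ge>0. \<forall>(A::(real^'n) set) S. finite A \<and> A \<noteq> {} \<and> card S \<le> Suc d \<and> good A S
             \<longrightarrow> FF A \<ge> c * real (card A) powr (1+\<delta>/(d+1)) / (1 + ln (real (card A))) powr E"
proof (induction d)
  case 0
  show ?case
    by (rule step_lemma[OF dpos c1 E1 H1, of 0]) simp
next
  case (Suc d)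
  have eq: "real (Suc d) = real (d+1)" by simp
  have IH': "Suc d > 0 \<Longrightarrow> \<exists>c'>0. \<exists>E'\<ge>0. \<forall>(A::(real^'n) set) S. finite A \<and> A \<noteq> {} \<and> card S \<le> Suc d \<and> good A S
             \<longrightarrow> FF A \<ge> c' * real (card A) powr (1+\<delta>/real (Suc d)) / (1 + ln (real (card A))) powr E'"
    unfolding eq by (rule Suc.IH)
  show ?case
    by (rule step_lemma[OF dpos c1 E1 H1 IH'])
qed

lemma card_sum_image:
  assumes "finite A"
  shows "card A = (\<Sum>z\<in>g ` A. card {v\<in>A. g v = z})"
proof -
  have "A = (\<Union>z\<in>g ` A. {v\<in>A. g v = z})" by auto
  then have "card A = card (\<Union>z\<in>g ` A. {v\<in>A. g v = z})" by simp
  also have "\<dots> = (\<Sum>z\<in>g ` A. card {v\<in>A. g v = z})"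
    by (rule card_UN_disjoint) (use assms in auto)
  finally show ?thesis .
qed

lemma R3:
  fixes n m W c E p :: real
  assumes "n \<ge> 2" "m \<ge> 1" "m \<le> n" "n \<le> W * m" "W > 0" "c > 0" "E \<ge> 0" "p \<ge> 0"
  shows "c / (W powr p * 3 powr E) * n powr p * ln n powr (-E) \<le> c * m powr p / (1 + ln m) powr E"
proof -
  have l2: "ln 2 \<ge> (1/2::real)" using ln2_ge_two_thirds by simp
  have lnn: "ln n \<ge> ln 2" using assms by simp
  have lpos: "ln n > 0" using assms by simp
  have lm: "ln m \<ge> 0" using assms by simp
  have a: "n powr p / W powr p \<le> m powr p"
  proof -
    have "n / W \<le> m" using assms by (simp add: field_simps)
    then have "(n/W) powr p \<le> m powr p" using assms by (intro powr_mono2) auto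
    then show ?thesis using assms by (simp add: powr_divide)
  qed
  have b: "(1 + ln m) powr E \<le> 3 powr E * ln n powr E"
  proof -
    have "ln m \<le> ln n" using assms by simp
    then have "1 + ln m \<le> 3 * ln n" using l2 lnn by linarith
    then have "(1 + ln m) powr E \<le> (3 * ln n) powr E" using assms lm by (intro powr_mono2) auto
    also have "\<dots> = 3 powr E * ln n powr E" using lpos by (simp add: powr_mult)
    finally show ?thesis .
  qed
  have bp: "(1 + ln m) powr E > 0" using lm by simp
  have "c / (W powr p * 3 powr E) * n powr p * ln n powr (-E) = c * (n powr p / W powr p) / (3 powr E * ln n powr E)"
    using lpos by (simp add: powr_minus divide_inverse mult_ac)
  also have "\<dots> \<le> c * m powr p / (1 + ln m) powr E"
    using a b bp assms by (intro frac_le mult_left_mono) auto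
  finally show ?thesis .
qed

theorem theorem1p1:
  fixes \<delta>\<^sub>1 :: real
  assumes "\<delta>\<^sub>1 > 0"
    and "\<exists>C>0. \<exists>D::real. \<forall>B::real set. finite B \<and> B \<noteq> {} \<longrightarrow>
           real (card (sumset B B)) + real (card (prodset B B))
             \<ge> C * real (card B) powr (1 + \<delta>\<^sub>1) * ln (real (card B)) powr D"
  shows "\<exists>C>0. \<exists>D::real. \<forall>A::(real^'n) set. finite A \<and> A \<noteq> {} \<longrightarrow>
           real (card (sumset A A)) + real (card (prodset A A))
             \<ge> C * real (card A) powr (1 + \<delta>\<^sub>1 / real CARD('n)) * ln (real (card A)) powr D"
proof -
  obtain c1 E1 where c1: "c1 > 0" and E1: "E1 \<ge> 0" and H1: "\<forall>B::real set. finite B \<and> B \<noteq> {} \<longrightarrow>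
           FF B \<ge> c1 * real (card B) powr (1+\<delta>\<^sub>1) / (1 + ln (real (card B))) powr E1"
    using hyp_norm[OF assms(2)] by blast
  define dd where "dd = CARD('n) - 1"
  have cardpos: "CARD('n) > 0" by (simp add: card_gt_0_iff)
  have dd: "Suc dd = CARD('n)" using cardpos by (simp add: dd_def)
  obtain c E where c: "c > 0" and E: "E \<ge> 0" and CL: "\<forall>(A::(real^'n) set) S. finite A \<and> A \<noteq> {} \<and> card S \<le> Suc dd \<and> good A S
             \<longrightarrow> FF A \<ge> c * real (card A) powr (1+\<delta>\<^sub>1/(dd+1)) / (1 + ln (real (card A))) powr E"
    using claim[OF assms(1) c1 E1 H1, of dd] by blast
  have dd1: "real (dd+1) = real CARD('n)" using dd by simp
  define p where "p = 1 + \<delta>\<^sub>1 / real CARD('n)"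
  define W where "W = real (2 ^ CARD('n))"
  define C where "C = c / (W powr p * 3 powr E)"
  have Wpos: "W > 0" by (simp add: W_def)
  have ppos: "p \<ge> 0" using assms(1) by (simp add: p_def)
  have Cpos: "C > 0" using c Wpos by (simp add: C_def)
  have key: "C * real (card A) powr (1 + \<delta>\<^sub>1 / real CARD('n)) * ln (real (card A)) powr (-E)
      \<le> real (card (sumset A A)) + real (card (prodset A A))"
    if A: "finite A" "A \<noteq> {}" for A :: "(real^'n) set"
  proof -
    define n where "n = card A"
    have n1: "n \<ge> 1" using A by (simp add: n_def Suc_le_eq card_gt_0_iff)
    show ?thesis
    proof (cases "n = 1")
      case True
      then show ?thesis by (simp add: n_def)
    next
      case False
      then have n2: "real n \<ge> 2" using n1 by simp
      define g where "g v = {j. v$j = (0::real)}" for v :: "real^'n"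
      define Z where "Z = g ` A"
      have finZ: "finite Z" using A by (simp add: Z_def)
      have Zne: "Z \<noteq> {}" using A by (simp add: Z_def)
      have cardZ: "card Z \<le> 2 ^ CARD('n)"
      proof -
        have "card Z \<le> card (Pow (UNIV :: 'n set))" by (rule card_mono) (auto simp: Z_def)
        also have "\<dots> = 2 ^ CARD('n)" by (simp add: card_Pow)
        finally show ?thesis .
      qed
      have nsum: "n = (\<Sum>z\<in>Z. card {v\<in>A. g v = z})"
        unfolding n_def Z_def by (rule card_sum_image[OF A(1)])
      obtain P where P: "P \<in> Z" and nP: "n \<le> card Z * card {v\<in>A. g v = P}"
        using pigeon[OF finZ Zne nsum] by blast
      define AP where "AP = {v\<in>A. g v = P}"
      define m where "m = card AP"
      have APsub: "AP \<subseteq> A" by (auto simp: AP_def)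
      have finAP: "finite AP" using A(1) APsub finite_subset by blast
      have APne: "AP \<noteq> {}" using P by (auto simp: AP_def Z_def)
      have goodAP: "good AP (- P)" by (auto simp: good_def AP_def g_def)
      have cardS: "card (- P) \<le> Suc dd"
        using dd card_mono[of "UNIV :: 'n set" "- P"] by simp
      have m1: "real m \<ge> 1" using finAP APne by (simp add: m_def Suc_le_eq card_gt_0_iff)
      have mn: "real m \<le> real n" using card_mono[OF A(1) APsub] by (simp add: m_def n_def)
      have nWm: "real n \<le> W * real m"
      proof -
        have "n \<le> 2 ^ CARD('n) * m"
          using nP cardZ by (simp add: AP_def m_def) (meson le_trans mult_le_mono1)
        then have "real n \<le> real (2 ^ CARD('n) * m)" by (simp only: of_nat_le_iff)
        then show ?thesis by (simp add: W_def)
      qed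
      have "C * real n powr p * ln (real n) powr (-E) \<le> c * real m powr p / (1 + ln (real m)) powr E"
        unfolding C_def by (rule R3[OF n2 m1 mn nWm Wpos c E ppos])
      also have "\<dots> \<le> FF AP"
      proof -
        have pre: "finite AP \<and> AP \<noteq> {} \<and> card (- P) \<le> Suc dd \<and> good AP (- P)"
          using finAP APne cardS goodAP by blast
        have r: "FF AP \<ge> c * real (card AP) powr (1+\<delta>\<^sub>1/(dd+1)) / (1 + ln (real (card AP))) powr E"
          by (rule mp[OF CL[THEN spec[where x=AP], THEN spec[where x="- P"]] pre])
        show ?thesis using r[unfolded dd1] by (simp only: p_def m_def)
      qed
      also have "\<dots> \<le> FF A" by (rule FF_mono[OF A(1) APsub])
      finally show ?thesis by (simp add: FF_def n_def p_def)
    qed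
  qed
  show ?thesis
    apply (rule exI[where x=C], rule conjI[OF Cpos])
    apply (rule exI[where x="-E"])
    apply (intro allI impI)
    apply (rule key)
     apply auto
    done
qed

end
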